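(* Every finite word accepted by $\widehat{\mathcal{T}_{p/q}}$ (i.e. labelling a path starting at state $0$) is a prefix of a span-word $M_n\ominus\mu_n$ for some $n\in\mathbb{N}$.
   Context: Let $p>q>1$ be coprime integers, $A_p=\{0,\dots,p-1\}$, $A_q=\{0,\dots,q-1\}$ and $B=\{p-(2q-1),\dots,p-1\}$. For $n\in\mathbb{N}$ and $a\in\mathbb{Z}$, let $\tau(n,a)=\frac{np+a}{q}$, defined only when $q$ divides $np+a$. Let $\mathcal{T}_{p/q}$ be the deterministic automaton with state set $\mathbb{N}$, alphabet $A_p$, initial state $0$, and transitions $n\xrightarrow{a}\tau(n,a)$ for $a\in A_p$ with $\tau(n,a)$ defined. The minimal word $\mu_n\in A_q^{\omega}$ (resp. maximal word $M_n\in\{p-q,\dots,p-1\}^{\omega}$) is the unique infinite word over $A_q$ (resp. over $\{p-q,\dots,p-1\}$) labelling a path of $\mathcal{T}_{p/q}$ starting at $n$. The span-word of $n$ is $M_n\ominus\mu_n$, with $\ominus$ letter-wise subtraction. Let $\widehat{\mathcal{T}_{p/q}}$ be the deterministic automaton with state set $\mathbb{N}$, alphabet $B$, initial state $0$, and transitions $n\xrightarrow{a}\tau(n,a)$ for $a\in B$ with $\tau(n,a)$ defined. *)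

theory Defs
  imports Main
begin

(* Transition n --a--> m of T_{p/q}: m = tau(n,a) = (n p + a)/q, defined iff q divides n p + a;
   states are natural numbers, so the target must be a natural number. Letters are integers. *)
definition trans :: "nat \<Rightarrow> nat \<Rightarrow> nat \<Rightarrow> int \<Rightarrow> nat \<Rightarrow> bool" where
  "trans p q n a m \<longleftrightarrow> int q * int m = int n * int p + a"

definition A_p :: "nat \<Rightarrow> int set" where "A_p p = {0..int p - 1}"
definition A_q :: "nat \<Rightarrow> int set" where "A_q q = {0..int q - 1}"
definition Amax :: "nat \<Rightarrow> nat \<Rightarrow> int set" where "Amax p q = {int p - int q..int p - 1}"
definition B :: "nat \<Rightarrow> nat \<Rightarrow> int set" where "B p q = {int p - (2 * int q - 1)..int p - 1}"

fun fpath :: "nat \<Rightarrow> nat \<Rightarrow> nat \<Rightarrow> int list \<Rightarrow> bool" where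
  "fpath p q n [] = True"
| "fpath p q n (a # u) = (\<exists>m. trans p q n a m \<and> fpath p q m u)"

definition ipath :: "nat \<Rightarrow> nat \<Rightarrow> nat \<Rightarrow> (nat \<Rightarrow> int) \<Rightarrow> bool" where
  "ipath p q n w \<longleftrightarrow> (\<exists>s. s 0 = n \<and> (\<forall>i. trans p q (s i) (w i) (s (Suc i))))"

definition minword :: "nat \<Rightarrow> nat \<Rightarrow> nat \<Rightarrow> (nat \<Rightarrow> int)" where
  "minword p q n = (THE w. (\<forall>i. w i \<in> A_q q) \<and> ipath p q n w)"

definition maxword :: "nat \<Rightarrow> nat \<Rightarrow> nat \<Rightarrow> (nat \<Rightarrow> int)" where
  "maxword p q n = (THE w. (\<forall>i. w i \<in> Amax p q) \<and> ipath p q n w)"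

definition spanword :: "nat \<Rightarrow> nat \<Rightarrow> nat \<Rightarrow> (nat \<Rightarrow> int)" where
  "spanword p q n = (\<lambda>i. maxword p q n i - minword p q n i)"

definition accepted_hat :: "nat \<Rightarrow> nat \<Rightarrow> int list \<Rightarrow> bool" where
  "accepted_hat p q u \<longleftrightarrow> set u \<subseteq> B p q \<and> fpath p q 0 u"

end

theory Submission
  imports Defs
begin

lemma trans_uniq:
  assumes "trans p q n a m" "trans p q n b m'" "lo \<le> a" "a < lo + int q" "lo \<le> b" "b < lo + int q"
  shows "a = b \<and> m = m'"
proof -
  have e: "int q * (int m - int m') = a - b" using assms(1,2) unfolding trans_def by (simp add: algebra_simps)
  have "int m = int m'"
  proof (rule ccontr)
    assume "int m \<noteq> int m'"
    then have "\<bar>int m - int m'\<bar> \<ge> 1" by linarith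
    then have "\<bar>int q * (int m - int m')\<bar> \<ge> int q" using mult_left_mono[of 1 "\<bar>int m - int m'\<bar>" "int q"] by (simp add: abs_mult)
    with e assms(3-6) show False by linarith
  qed
  with e show ?thesis by simp
qed

lemma trans_add:
  assumes "trans p q a x b" "trans p q c y d"
  shows "trans p q (a + c) (x + y) (b + d)"
  using assms unfolding trans_def by (simp add: algebra_simps)

definition lgen :: "nat \<Rightarrow> nat \<Rightarrow> int \<Rightarrow> nat \<Rightarrow> int" where
  "lgen p q lo n = lo + ((- (int n * int p) - lo) mod int q)"

definition sgen :: "nat \<Rightarrow> nat \<Rightarrow> int \<Rightarrow> nat \<Rightarrow> nat" where
  "sgen p q lo n = nat ((int n * int p + lgen p q lo n) div int q)"

lemma lgen_bounds:
  assumes "q > 0" shows "lo \<le> lgen p q lo n \<and> lgen p q lo n < lo + int q"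
  using assms unfolding lgen_def by simp

lemma trans_gen:
  assumes "q > 0" "lo \<ge> 0"
  shows "trans p q n (lgen p q lo n) (sgen p q lo n)"
proof -
  have d: "int q dvd int n * int p + lgen p q lo n"
  proof -
    have "(int n * int p + lgen p q lo n) mod int q = (int n * int p + lo + (- (int n * int p) - lo)) mod int q"
      unfolding lgen_def by (metis add.assoc mod_add_right_eq)
    then show ?thesis by (simp add: mod_0_imp_dvd)
  qed
  have nn: "int n * int p + lgen p q lo n \<ge> 0" using lgen_bounds[OF assms(1), of lo p n] assms by simp
  have "int q * ((int n * int p + lgen p q lo n) div int q) = int n * int p + lgen p q lo n"
    using d by simp
  moreover have "(int n * int p + lgen p q lo n) div int q \<ge> 0" using nn assms by (simp add: pos_imp_zdiv_nonneg_iff)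
  ultimately show ?thesis unfolding trans_def sgen_def by simp
qed

lemma word_unique:
  assumes "q > 0"
    and "\<forall>i. w i \<in> {lo..lo + int q - 1}" "ipath p q n w"
    and "\<forall>i. w' i \<in> {lo..lo + int q - 1}" "ipath p q n w'"
  shows "w = w'"
proof -
  obtain s where s: "s 0 = n" "\<forall>i. trans p q (s i) (w i) (s (Suc i))" using assms(3) ipath_def by blast
  obtain s' where s': "s' 0 = n" "\<forall>i. trans p q (s' i) (w' i) (s' (Suc i))" using assms(5) ipath_def by blast
  have "s i = s' i \<and> w i = w' i" for i
  proof (induction i)
    case 0
    then show ?case using s s' assms trans_uniq[of p q n "w 0" "s 1" "w' 0" "s' 1" lo]
      by (metis atLeastAtMost_iff One_nat_def zle_add1_eq_le add.commute add.left_commute diff_add_cancel)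
  next
    case (Suc i)
    have "s (Suc i) = s' (Suc i)"
      using Suc s s' assms trans_uniq[of p q "s i" "w i" "s (Suc i)" "w' i" "s' (Suc i)" lo]
      by (smt (verit) atLeastAtMost_iff)
    moreover have "w (Suc i) = w' (Suc i)"
      using calculation s s' assms trans_uniq[of p q "s (Suc i)" "w (Suc i)" _ "w' (Suc i)" _ lo]
      by (smt (verit) atLeastAtMost_iff)
    ultimately show ?case by simp
  qed
  then show ?thesis by auto
qed

lemma word_gen:
  assumes "q > 0" "lo \<ge> 0"
    and "\<forall>i. w i \<in> {lo..lo + int q - 1}" "ipath p q n w"
  shows "w = (\<lambda>i. lgen p q lo ((sgen p q lo ^^ i) n))"
proof (rule word_unique[OF assms(1,3,4)])
  show "\<forall>i. lgen p q lo ((sgen p q lo ^^ i) n) \<in> {lo..lo + int q - 1}"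
    using lgen_bounds[OF assms(1)] by auto
  show "ipath p q n (\<lambda>i. lgen p q lo ((sgen p q lo ^^ i) n))"
    unfolding ipath_def
    by (rule exI[of _ "\<lambda>i. (sgen p q lo ^^ i) n"]) (simp add: trans_gen[OF assms(1,2)])
qed

lemma ex_word_gen:
  assumes "q > 0" "lo \<ge> 0"
  shows "(\<forall>i. (\<lambda>i. lgen p q lo ((sgen p q lo ^^ i) n)) i \<in> {lo..lo + int q - 1})
     \<and> ipath p q n (\<lambda>i. lgen p q lo ((sgen p q lo ^^ i) n))"
proof
  show "\<forall>i. lgen p q lo ((sgen p q lo ^^ i) n) \<in> {lo..lo + int q - 1}"
    using lgen_bounds[OF assms(1)] by auto
  show "ipath p q n (\<lambda>i. lgen p q lo ((sgen p q lo ^^ i) n))"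
    unfolding ipath_def
    by (rule exI[of _ "\<lambda>i. (sgen p q lo ^^ i) n"]) (simp add: trans_gen[OF assms(1,2)])
qed

lemma minword_eq:
  assumes "q > 0"
  shows "minword p q n = (\<lambda>i. lgen p q 0 ((sgen p q 0 ^^ i) n))"
proof -
  have "A_q q = {0..0 + int q - 1}" unfolding A_q_def by simp
  then show ?thesis unfolding minword_def
    using ex_word_gen[OF assms, of 0 p n] word_gen[OF assms, of 0] by (intro the_equality) auto
qed

lemma maxword_eq:
  assumes "q > 0" "p \<ge> q"
  shows "maxword p q n = (\<lambda>i. lgen p q (int p - int q) ((sgen p q (int p - int q) ^^ i) n))"
proof -
  have lo: "int p - int q \<ge> 0" using assms by simp
  have "Amax p q = {int p - int q..(int p - int q) + int q - 1}" unfolding Amax_def by simp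
  then show ?thesis unfolding maxword_def
    using ex_word_gen[OF assms(1) lo, of p n] word_gen[OF assms(1) lo, of _ p n] by (intro the_equality) auto
qed

lemma fpath_states:
  "fpath p q n u \<Longrightarrow> \<exists>e. e 0 = n \<and> (\<forall>i<length u. trans p q (e i) (u!i) (e (Suc i)))"
proof (induction u arbitrary: n)
  case Nil
  then show ?case by auto
next
  case (Cons a u)
  then obtain m where m: "trans p q n a m" "fpath p q m u" by auto
  then obtain e where e: "e 0 = m" "\<forall>i<length u. trans p q (e i) (u!i) (e (Suc i))" using Cons.IH by blast
  define e' where "e' = (\<lambda>i. if i = 0 then n else e (i - 1))"
  have "\<forall>i<length (a#u). trans p q (e' i) ((a#u)!i) (e' (Suc i))"
  proof (intro allI impI)
    fix i assume "i < length (a#u)"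
    then show "trans p q (e' i) ((a#u)!i) (e' (Suc i))"
      using m e unfolding e'_def by (cases i) auto
  qed
  moreover have "e' 0 = n" by (simp add: e'_def)
  ultimately show ?case by blast
qed

lemma prefix_min:
  assumes q: "q > 1" and p0: "p > 0" and cp: "coprime p q" and w: "set w \<subseteq> {0..int q - 1}"
  shows "\<exists>n. \<forall>k. \<forall>i<length w. lgen p q 0 ((sgen p q 0 ^^ i) (n + q ^ length w * k)) = w!i"
  using w
proof (induction w)
  case Nil
  then show ?case by simp
next
  case (Cons a w)
  then obtain m where m: "\<forall>k. \<forall>i<length w. lgen p q 0 ((sgen p q 0 ^^ i) (m + q ^ length w * k)) = w!i"
    by auto
  have a: "0 \<le> a" "a < int q" using Cons.prems by auto
  define L where "L = length w"
  define Q where "Q = q ^ Suc L"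
  have Qpos: "Q > 0" using q unfolding Q_def by simp
  have "coprime p Q" using cp unfolding Q_def by simp
  then have "coprime (int p) (int Q)" by simp
  then have "gcd (int p) (int Q) = 1" by simp
  then obtain x y where xy: "x * int p + y * int Q = 1" using bezout_int[of "int p" "int Q"] by auto
  define c where "c = int q * int m - a"
  define r where "r = (x * c) mod int Q"
  have r0: "r \<ge> 0" unfolding r_def using Qpos by simp
  define n where "n = nat r + Q * q * m"
  have rdef: "r = x * c - int Q * ((x * c) div int Q)" unfolding r_def by (simp add: minus_div_mult_eq_mod[symmetric])
  have "int n * int p + a - int q * int m = r * int p - c + int Q * (int q * int m * int p)"
    unfolding n_def c_def using r0 by (simp add: algebra_simps)
  also have "r * int p - c = (x * int p - 1) * c - int Q * ((x * c) div int Q) * int p"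
    unfolding rdef by (simp add: algebra_simps)
  also have "x * int p - 1 = - y * int Q" using xy by simp
  finally have eq: "int n * int p + a - int q * int m
     = int Q * (- y * c - ((x * c) div int Q) * int p + int q * int m * int p)"
    by (simp add: algebra_simps)
  define j where "j = - y * c - ((x * c) div int Q) * int p + int q * int m * int p"
  have "Q * p \<ge> 1" using Qpos p0 by (simp add: Suc_le_eq)
  then have "int Q * int p \<ge> 1" by (metis of_nat_mult of_nat_1 of_nat_le_iff)
  then have "int q * int m * (int Q * int p) \<ge> int q * int m * 1"
    by (intro mult_left_mono) auto
  then have nn: "int n * int p + a - int q * int m \<ge> 0"
  proof -
    have "r * int p \<ge> 0" using r0 by simp
    moreover have "int n * int p + a - int q*int m = r*int p + a + (int q*int m*(int Q*int p) - int q*int m)"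
      unfolding n_def using r0 by (simp add: algebra_simps)
    ultimately show ?thesis using a \<open>int q * int m * (int Q * int p) \<ge> int q * int m * 1\<close>
      by linarith
  qed
  have j0: "j \<ge> 0" using nn eq Qpos unfolding j_def by (simp add: zero_le_mult_iff)
  define J where "J = nat j"
  have step: "lgen p q 0 (n + Q * k) = a \<and> sgen p q 0 (n + Q * k) = m + q ^ L * (J + k * p)" for k
  proof -
    have tr: "trans p q (n + Q * k) a (m + q ^ L * (J + k * p))"
    proof -
      have eqj: "int n * int p + a = int q * int m + int Q * j" using eq unfolding j_def by simp
      have JJ: "int J = j" using j0 by (simp add: J_def)
      have QL: "int Q = int q * int q ^ L" unfolding Q_def by simp
      have "int q * int (m + q ^ L * (J + k * p)) = int q * int m + int Q * j + int Q * int k * int p"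
        using JJ QL by (simp add: algebra_simps)
      also have "\<dots> = int (n + Q * k) * int p + a" using eqj by (simp add: algebra_simps)
      finally show ?thesis unfolding trans_def .
    qed
    have tg: "trans p q (n + Q * k) (lgen p q 0 (n + Q * k)) (sgen p q 0 (n + Q * k))"
      using trans_gen[of q 0 p "n + Q*k"] q by simp
    show ?thesis using trans_uniq[OF tr tg, of 0] a lgen_bounds[of q 0 p "n + Q*k"] q by auto
  qed
  show ?case
  proof (rule exI[of _ n], intro allI impI)
    fix k i assume i: "i < length (a # w)"
    have Qe: "q ^ length (a # w) = Q" unfolding Q_def L_def by simp
    show "lgen p q 0 ((sgen p q 0 ^^ i) (n + q ^ length (a # w) * k)) = (a # w) ! i"
    proof (cases i)
      case 0
      then show ?thesis using step Qe by simp
    next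
      case (Suc i')
      have "(sgen p q 0 ^^ i) (n + Q * k) = (sgen p q 0 ^^ i') (m + q ^ L * (J + k * p))"
        unfolding Suc funpow_Suc_right comp_apply using step[of k] by presburger
      then show ?thesis using m i Suc Qe L_def by simp
    qed
  qed
qed

theorem mainTheorem8:
  fixes p q :: nat and u :: "int list"
  assumes "q > 1" and "p > q" and "coprime p q"
    and "accepted_hat p q u"
  shows "\<exists>n::nat. \<forall>i < length u. u ! i = spanword p q n i"
proof -
  have uB: "set u \<subseteq> B p q" and fp: "fpath p q 0 u" using assms(4) accepted_hat_def by auto
  obtain e where e: "e 0 = 0" "\<forall>i<length u. trans p q (e i) (u!i) (e (Suc i))"
    using fpath_states[OF fp] by blast
  define w where "w = map (\<lambda>c. max 0 (int p - int q - c)) u"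
  have uBi: "int p - (2 * int q - 1) \<le> u!i \<and> u!i \<le> int p - 1" if "i < length u" for i
  proof -
    have "u!i \<in> B p q" using uB nth_mem[OF that] by blast
    then show ?thesis by (simp add: B_def)
  qed
  have "set w \<subseteq> {0..int q - 1}"
  proof
    fix c assume "c \<in> set w"
    then obtain i where i: "i < length u" "c = w!i" unfolding w_def by (auto simp: in_set_conv_nth)
    then show "c \<in> {0..int q - 1}" using uBi[OF i(1)] unfolding w_def by auto
  qed
  then obtain n0 where n0: "\<forall>k. \<forall>i<length w. lgen p q 0 ((sgen p q 0 ^^ i) (n0 + q ^ length w * k)) = w!i"
    using prefix_min[OF assms(1) _ assms(3) \<open>set w \<subseteq> {0..int q - 1}\<close>] assms(2) by auto
  obtain n where n: "\<forall>i<length w. lgen p q 0 ((sgen p q 0 ^^ i) n) = w!i"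
    using spec[OF n0, of 0] by simp
  define t where "t i = (sgen p q 0 ^^ i) n" for i
  define T where "T i = (sgen p q (int p - int q) ^^ i) n" for i
  have q0: "q > 0" using assms by simp
  have key: "lgen p q (int p - int q) (T i) = w!i + u!i \<and> T (Suc i) = t (Suc i) + e (Suc i)"
    if i: "i < length u" and h: "T i = t i + e i" for i
  proof -
    have t1: "trans p q (t i) (w!i) (t (Suc i))"
      using trans_gen[OF q0, of 0 p "t i"] n i unfolding t_def w_def by simp
    have t2: "trans p q (T i) (w!i + u!i) (t (Suc i) + e (Suc i))"
      using trans_add[OF t1, of "e i" "u!i" "e (Suc i)"] e i h by simp
    have t3: "trans p q (T i) (lgen p q (int p - int q) (T i)) (T (Suc i))"
      using trans_gen[OF q0, of "int p - int q" p "T i"] assms unfolding T_def by simp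
    have bw: "int p - int q \<le> w!i + u!i \<and> w!i + u!i < int p - int q + int q"
      using uBi[OF i] i unfolding w_def by auto
    show ?thesis using trans_uniq[OF t2 t3, of "int p - int q"] bw
        lgen_bounds[OF q0, of "int p - int q" p "T i"] by auto
  qed
  have inv: "i \<le> length u \<Longrightarrow> T i = t i + e i" for i
  proof (induction i)
    case 0
    then show ?case using e unfolding T_def t_def by simp
  next
    case (Suc i)
    then show ?case using key by simp
  qed
  show ?thesis
  proof (rule exI[of _ n], intro allI impI)
    fix i assume i: "i < length u"
    have "spanword p q n i = lgen p q (int p - int q) (T i) - lgen p q 0 (t i)"
      unfolding spanword_def maxword_eq[OF q0 less_imp_le[OF assms(2)]] minword_eq[OF q0] T_def t_def by simp
    also have "\<dots> = u!i" using key[OF i inv] i n unfolding t_def w_def by simp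
    finally show "u!i = spanword p q n i" by simp
  qed
qed

end
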